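(* Let $s>0$, $x_0>0$, and let $P:[0,\infty)\to\mathbb{R}$ be a $\mathcal{C}^2$, strictly increasing function with $P(0)=0$, $P(x)>0$ for $x>0$, satisfying $\int_{x_0}^{\infty}P(z)z^{-1-2/s}\,dz<\infty$. Let $\gamma_c(x)=\frac{\sqrt{1+4P(x)}-1}{2}$ and consider the solution of \[ \frac{d\gamma_1}{dx}=\frac{\gamma_1(x)+\gamma_1(x)^2-P(x)}{s\,x\,\gamma_1(x)},\qquad \gamma_1(x_0)=\gamma_0, \] with $0<\gamma_0<\gamma_c(x_0)$. Then there is a finite $x_1>x_0$ such that $\gamma_1(x_1)=0$, i.e. the positive solution on $[x_0,\infty)$ ceases to exist at $x_1$ with $\gamma_1(x)\to0$ as $x\to x_1^-$.
   Context: Solutions are taken in the region $x>0$, $\gamma_1>0$ where the right-hand side is regular, as the unique maximal such solution. *)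

theory Defs
  imports "HOL-Analysis.Analysis"
begin

definition C2_on_nonneg :: "(real \<Rightarrow> real) \<Rightarrow> bool" where
  "C2_on_nonneg P \<longleftrightarrow> (\<exists>P' P''.
     (\<forall>x\<in>{0..}. (P has_real_derivative P' x) (at x within {0..})) \<and>
     (\<forall>x\<in>{0..}. (P' has_real_derivative P'' x) (at x within {0..})) \<and>
     continuous_on {0..} P'')"

definition gamma_c :: "(real \<Rightarrow> real) \<Rightarrow> real \<Rightarrow> real" where
  "gamma_c P x = (sqrt (1 + 4 * P x) - 1) / 2"

definition pos_solution ::
  "real \<Rightarrow> (real \<Rightarrow> real) \<Rightarrow> real \<Rightarrow> real \<Rightarrow> (real \<Rightarrow> real) \<Rightarrow> real \<Rightarrow> bool" where
  "pos_solution s P x0 gamma0 g b \<longleftrightarrow>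
     x0 < b \<and> g x0 = gamma0 \<and>
     (\<forall>x\<in>{x0..<b}. g x > 0 \<and>
        (g has_real_derivative (g x + (g x)\<^sup>2 - P x) / (s * x * g x)) (at x within {x0..<b}))"

end

theory Submission
  imports Defs
begin


lemma has_integral_pow0:
  fixes t :: real assumes "0 \<le> t"
  shows "((\<lambda>x. c * x ^ k) has_integral (c * t ^ Suc k / Suc k)) {0..t}"
proof -
  have "((\<lambda>x. c * x ^ k) has_integral ((\<lambda>x. c * x ^ Suc k / Suc k) t - (\<lambda>x. c * x ^ Suc k / Suc k) 0)) {0..t}"
    apply (rule fundamental_theorem_of_calculus[OF assms])
    apply (unfold has_real_derivative_iff_has_vector_derivative[symmetric])
    apply (rule derivative_eq_intros refl | simp)+
    done
  then show ?thesis by simp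
qed

lemma ibound:
  fixes f g :: "real \<Rightarrow> real"
  assumes "f integrable_on S" "g integrable_on S" "\<And>x. x \<in> S \<Longrightarrow> \<bar>f x\<bar> \<le> g x"
  shows "\<bar>integral S f\<bar> \<le> integral S g"
  using integral_norm_bound_integral[OF assms(1,2)] assms(3) by simp

lemma picard:
  fixes f :: "real \<Rightarrow> real \<Rightarrow> real" and a L B y0 :: real
  assumes a: "0 \<le> a" and L: "0 \<le> L"
    and cont: "\<And>u. continuous_on {0..a} u \<Longrightarrow> continuous_on {0..a} (\<lambda>t. f t (u t))"
    and lip: "\<And>t y z. t \<in> {0..a} \<Longrightarrow> \<bar>f t y - f t z\<bar> \<le> L * \<bar>y - z\<bar>"
    and bnd: "\<And>t y. t \<in> {0..a} \<Longrightarrow> \<bar>f t y\<bar> \<le> B"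
  shows "\<exists>u. u 0 = y0 \<and> continuous_on {0..a} u \<and>
     (\<forall>t\<in>{0..a}. (u has_real_derivative f t (u t)) (at t within {0..a}))"
proof -
  have B: "0 \<le> B" using bnd[of 0 0] a by auto
  define it :: "nat \<Rightarrow> real \<Rightarrow> real" where
    "it = rec_nat (\<lambda>t. y0) (\<lambda>n v t. y0 + integral {0..t} (\<lambda>\<tau>. f \<tau> (v \<tau>)))"
  have it0: "it 0 = (\<lambda>t. y0)" by (simp add: it_def)
  have itS: "it (Suc n) = (\<lambda>t. y0 + integral {0..t} (\<lambda>\<tau>. f \<tau> (it n \<tau>)))" for n
    by (simp add: it_def)
  have itS': "it (Suc n) t = y0 + integral {0..t} (\<lambda>\<tau>. f \<tau> (it n \<tau>))" for n t
    by (simp add: itS)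
  have intg: "(\<lambda>\<tau>. f \<tau> (u \<tau>)) integrable_on {0..t}"
    if "continuous_on {0..a} u" "t \<le> a" for u t
    using cont[OF that(1)] that(2)
    by (metis atLeastatMost_subset_iff continuous_on_subset integrable_continuous_real order_refl)
  have cit: "continuous_on {0..a} (it n)" for n
  proof (induction n)
    case 0 then show ?case by (simp add: it0)
  next
    case (Suc n)
    have "continuous_on {0..a} (\<lambda>x. integral {0..x} (\<lambda>\<tau>. f \<tau> (it n \<tau>)))"
      by (rule indefinite_integral_continuous_1) (rule intg[OF Suc order_refl])
    then show ?case unfolding itS by (intro continuous_intros)
  qed
  have dif: "\<bar>it (Suc n) t - it n t\<bar> \<le> B * L ^ n * t ^ Suc n / fact (Suc n)"
    if "t \<in> {0..a}" for n t
    using that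
  proof (induction n arbitrary: t)
    case 0
    have "\<bar>integral {0..t} (\<lambda>\<tau>. f \<tau> y0)\<bar> \<le> integral {0..t} (\<lambda>\<tau>. B)"
      apply (rule ibound)
      using intg[of "\<lambda>_. y0" t] 0 bnd by auto
    then show ?case using 0 by (simp add: itS it0 mult.commute)
  next
    case (Suc n)
    have "\<bar>it (Suc (Suc n)) t - it (Suc n) t\<bar>
        = \<bar>integral {0..t} (\<lambda>\<tau>. f \<tau> (it (Suc n) \<tau>) - f \<tau> (it n \<tau>))\<bar>"
      using intg[OF cit, of t] Suc.prems
      by (simp only: itS'[of "Suc n" t] itS'[of n t], subst integral_diff) auto
    also have "\<dots> \<le> integral {0..t} (\<lambda>\<tau>. L * (B * L ^ n / fact (Suc n)) * \<tau> ^ Suc n)"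
    proof (rule ibound)
      show "(\<lambda>\<tau>. f \<tau> (it (Suc n) \<tau>) - f \<tau> (it n \<tau>)) integrable_on {0..t}"
        using intg[OF cit, of t] Suc.prems by (intro integrable_diff) auto
      show "(\<lambda>\<tau>. L * (B * L ^ n / fact (Suc n)) * \<tau> ^ Suc n) integrable_on {0..t}"
        using has_integral_pow0[of t "L * (B * L ^ n / fact (Suc n))" "Suc n"] Suc.prems
        by (auto intro: has_integral_integrable)
      fix x assume x: "x \<in> {0..t}"
      then have xa: "x \<in> {0..a}" using Suc.prems by auto
      have "\<bar>f x (it (Suc n) x) - f x (it n x)\<bar> \<le> L * \<bar>it (Suc n) x - it n x\<bar>"
        by (rule lip[OF xa])
      also have "\<dots> \<le> L * (B * L ^ n * x ^ Suc n / fact (Suc n))"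
        by (rule mult_left_mono[OF Suc.IH[OF xa] L])
      finally show "\<bar>f x (it (Suc n) x) - f x (it n x)\<bar> \<le> L * (B * L ^ n / fact (Suc n)) * x ^ Suc n"
        by simp
    qed
    also have "\<dots> = L * (B * L ^ n / fact (Suc n)) * t ^ Suc (Suc n) / Suc (Suc n)"
      using has_integral_pow0[of t "L * (B * L ^ n / fact (Suc n))" "Suc n"] Suc.prems
      by (intro integral_unique) auto
    also have "\<dots> = B * L ^ Suc n * t ^ Suc (Suc n) / fact (Suc (Suc n))"
      by (simp add: field_simps)
    finally show ?case .
  qed
  define M where "M n = B * L ^ n * a ^ Suc n / fact (Suc n)" for n
  have Mb: "\<bar>it (Suc n) t - it n t\<bar> \<le> M n" if "t \<in> {0..a}" for n t
  proof -
    have "t ^ Suc n \<le> a ^ Suc n" using that by (intro power_mono) auto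
    then have "B * L ^ n * t ^ Suc n \<le> B * L ^ n * a ^ Suc n"
      using B L by (intro mult_left_mono) auto
    then show ?thesis using dif[OF that, of n] unfolding M_def
      by (meson divide_right_mono fact_ge_zero order_trans)
  qed
  have sM: "summable M"
  proof (rule summable_comparison_test')
    show "summable (\<lambda>n. B * a * (inverse (fact n) * (L * a) ^ n))"
      by (intro summable_mult summable_exp)
    fix n
    have "M n = B * a * ((L * a) ^ n / fact (Suc n))"
      by (simp add: M_def power_mult_distrib field_simps)
    also have "\<dots> \<le> B * a * ((L * a) ^ n / fact n)"
      using B a L by (intro mult_left_mono divide_left_mono) (auto simp: fact_mono)
    finally show "norm (M n) \<le> B * a * (inverse (fact n) * (L * a) ^ n)"
      using B a L unfolding M_def by (simp add: field_simps)
  qed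
  define d where "d i t = it (Suc i) t - it i t" for i t
  have ul0: "uniform_limit {0..a} (\<lambda>n t. \<Sum>i<n. d i t) (\<lambda>t. suminf (\<lambda>i. d i t)) sequentially"
    by (rule Weierstrass_m_test[OF _ sM]) (use Mb in \<open>auto simp: d_def\<close>)
  define u where "u t = y0 + suminf (\<lambda>i. d i t)" for t
  have telesc: "(\<Sum>i<n. d i t) = it n t - y0" for n t
    unfolding d_def by (subst sum_lessThan_telescope) (simp add: it0)
  have ul: "uniform_limit {0..a} it u sequentially"
  proof -
    have "uniform_limit {0..a} (\<lambda>n t. y0 + (\<Sum>i<n. d i t)) (\<lambda>t. y0 + suminf (\<lambda>i. d i t)) sequentially"
      by (intro uniform_limit_intros ul0)
    then show ?thesis unfolding telesc u_def by simp
  qed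
  have cu: "continuous_on {0..a} u"
    by (rule uniform_limit_theorem[OF _ ul]) (auto simp: cit)
  have inteq: "u t = y0 + integral {0..t} (\<lambda>\<tau>. f \<tau> (u \<tau>))" if t: "t \<in> {0..a}" for t
  proof -
    have l1: "(\<lambda>n. it (Suc n) t) \<longlonglongrightarrow> u t"
      using tendsto_uniform_limitI[OF ul t] by (rule LIMSEQ_Suc)
    have l2: "(\<lambda>n. it (Suc n) t) \<longlonglongrightarrow> y0 + integral {0..t} (\<lambda>\<tau>. f \<tau> (u \<tau>))"
    proof (rule LIMSEQ_I)
      fix e :: real assume e: "0 < e"
      define e' where "e' = e / (L * a + 1)"
      have "0 < L * a + 1" using L a by (simp add: add_nonneg_pos)
      then have e': "0 < e'" using e unfolding e'_def by (intro divide_pos_pos) auto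
      from uniform_limitD[OF ul e'] obtain N where
        N: "\<And>n. n \<ge> N \<Longrightarrow> \<forall>x\<in>{0..a}. dist (it n x) (u x) < e'"
        by (auto simp: eventually_sequentially)
      show "\<exists>N. \<forall>n\<ge>N. norm (it (Suc n) t - (y0 + integral {0..t} (\<lambda>\<tau>. f \<tau> (u \<tau>)))) < e"
      proof (intro exI allI impI)
        fix n assume n: "n \<ge> N"
        have "norm (it (Suc n) t - (y0 + integral {0..t} (\<lambda>\<tau>. f \<tau> (u \<tau>))))
            = \<bar>integral {0..t} (\<lambda>\<tau>. f \<tau> (it n \<tau>) - f \<tau> (u \<tau>))\<bar>"
          using intg[OF cit, of t] intg[OF cu, of t] t
          by (simp only: itS'[of n t], subst integral_diff) auto
        also have "\<dots> \<le> integral {0..t} (\<lambda>\<tau>. L * e')"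
        proof (rule ibound)
          show "(\<lambda>\<tau>. f \<tau> (it n \<tau>) - f \<tau> (u \<tau>)) integrable_on {0..t}"
            using intg[OF cit, of t] intg[OF cu, of t] t by (intro integrable_diff) auto
          fix x assume x: "x \<in> {0..t}"
          then have xa: "x \<in> {0..a}" using t by auto
          have "\<bar>f x (it n x) - f x (u x)\<bar> \<le> L * \<bar>it n x - u x\<bar>" by (rule lip[OF xa])
          also have "\<dots> \<le> L * e'"
            using N[OF n] xa L by (intro mult_left_mono) (auto simp: dist_real_def less_imp_le)
          finally show "\<bar>f x (it n x) - f x (u x)\<bar> \<le> L * e'" .
        qed auto
        also have "\<dots> = L * e' * t" using t by simp
        also have "\<dots> \<le> L * e' * a" using t L e' by (intro mult_left_mono) auto
        also have "\<dots> < e"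
        proof -
          have "L * e' * a = e * (L * a) / (L * a + 1)" by (simp add: e'_def)
          also have "\<dots> < e" using e L a \<open>0 < L * a + 1\<close>
            by (simp add: divide_less_eq)
          finally show ?thesis .
        qed
        finally show "norm (it (Suc n) t - (y0 + integral {0..t} (\<lambda>\<tau>. f \<tau> (u \<tau>)))) < e" .
      qed
    qed
    show ?thesis using LIMSEQ_unique[OF l1 l2] .
  qed
  show ?thesis
  proof (intro exI conjI ballI)
    show "u 0 = y0" using inteq[of 0] a by simp
    show "continuous_on {0..a} u" by (rule cu)
    fix t assume t: "t \<in> {0..a}"
    have "((\<lambda>x. y0 + integral {0..x} (\<lambda>\<tau>. f \<tau> (u \<tau>))) has_real_derivative f t (u t)) (at t within {0..a})"
      using integral_has_real_derivative[OF cont[OF cu] t] by (intro derivative_eq_intros) auto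
    then show "(u has_real_derivative f t (u t)) (at t within {0..a})"
      by (rule has_field_derivative_transform_within[where d=1]) (use t inteq in auto)
  qed
qed


lemma inv_deriv_within:
  fixes f g :: "real \<Rightarrow> real"
  assumes df: "(f has_real_derivative D) (at x within S)" and D: "D \<noteq> 0" and x: "x \<in> S"
    and gf: "\<And>z. z \<in> S \<Longrightarrow> g (f z) = z"
    and cg: "continuous (at (f x) within f ` S) g"
  shows "(g has_real_derivative inverse D) (at (f x) within f ` S)"
proof -
  define q where "q w = (f w - f x) / (w - x)" for w
  have q: "(q \<longlongrightarrow> D) (at x within S)" using df unfolding has_field_derivative_iff q_def .
  have fl: "filterlim g (at x within S) (at (f x) within f ` S)"
    unfolding filterlim_at
  proof
    show "\<forall>\<^sub>F y in at (f x) within f ` S. g y \<in> S \<and> g y \<noteq> x"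
      unfolding eventually_at_filter
      by (rule always_eventually) (auto simp: gf)
    show "(g \<longlongrightarrow> x) (at (f x) within f ` S)"
      using cg gf[OF x] by (simp add: continuous_within)
  qed
  have "((\<lambda>y. inverse (q (g y))) \<longlongrightarrow> inverse D) (at (f x) within f ` S)"
    by (intro tendsto_inverse filterlim_compose[OF q fl] D)
  moreover have "\<forall>\<^sub>F y in at (f x) within f ` S. inverse (q (g y)) = (g y - g (f x)) / (y - f x)"
    unfolding eventually_at_filter
  proof (rule always_eventually, intro allI impI)
    fix y assume y: "y \<noteq> f x" "y \<in> f ` S"
    then obtain z where z: "z \<in> S" "y = f z" by auto
    have "g y \<noteq> x" using y z gf by auto
    then show "inverse (q (g y)) = (g y - g (f x)) / (y - f x)"
      using z gf x by (simp add: q_def)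
  qed
  ultimately show ?thesis unfolding has_field_derivative_iff
    by (rule Lim_transform_eventually)
qed


lemma ode_diff_alg:
  fixes g h p s x :: real
  assumes "g \<noteq> 0" "h \<noteq> 0" "s \<noteq> 0" "x \<noteq> 0"
  shows "(h + h\<^sup>2 - p) / (s * x * h) - (g + g\<^sup>2 - p) / (s * x * g)
       = (h - g) * ((1 + p / (g * h)) / (s * x))"
  using assms by (simp add: field_simps power2_eq_square)

lemma uniq:
  fixes g h P :: "real \<Rightarrow> real" and s x0 t :: real
  assumes s: "s > 0" and x0: "x0 > 0" and t: "x0 \<le> t"
    and Pm: "\<And>x. x \<in> {x0..t} \<Longrightarrow> P x \<le> P t" and Pt: "P t \<ge> 0"
    and gpos: "\<And>x. x \<in> {x0..t} \<Longrightarrow> g x > 0"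
    and hpos: "\<And>x. x \<in> {x0..t} \<Longrightarrow> h x > 0"
    and dg: "\<And>x. x \<in> {x0..t} \<Longrightarrow>
       (g has_real_derivative (g x + (g x)\<^sup>2 - P x) / (s * x * g x)) (at x within {x0..t})"
    and dh: "\<And>x. x \<in> {x0..t} \<Longrightarrow>
       (h has_real_derivative (h x + (h x)\<^sup>2 - P x) / (s * x * h x)) (at x within {x0..t})"
    and init: "g x0 = h x0"
  shows "h t = g t"
proof -
  let ?S = "{x0..t}"
  have cg: "continuous_on ?S g" by (rule DERIV_continuous_on[OF dg])
  have ch: "continuous_on ?S h" by (rule DERIV_continuous_on[OF dh])
  obtain xg where xg: "xg \<in> ?S" "\<And>y. y \<in> ?S \<Longrightarrow> g xg \<le> g y"
    using continuous_attains_inf[OF compact_Icc _ cg] t by auto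
  obtain xh where xh: "xh \<in> ?S" "\<And>y. y \<in> ?S \<Longrightarrow> h xh \<le> h y"
    using continuous_attains_inf[OF compact_Icc _ ch] t by auto
  define mg where "mg = g xg"
  define mh where "mh = h xh"
  have mg: "mg > 0" using gpos[OF xg(1)] by (simp add: mg_def)
  have mh: "mh > 0" using hpos[OF xh(1)] by (simp add: mh_def)
  define K0 where "K0 = 1 + P t / (mg * mh)"
  have K0: "K0 \<ge> 0" using Pt mg mh by (simp add: K0_def)
  define K where "K = K0 / (s * x0)"
  define c where "c x = (1 + P x / (g x * h x)) / (s * x)" for x
  have cK: "c x \<le> K" if x: "x \<in> ?S" for x
  proof -
    have gx: "g x > 0" "h x > 0" using gpos[OF x] hpos[OF x] by auto
    have gh: "mg * mh \<le> g x * h x"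
      using xg(2)[OF x] xh(2)[OF x] mg mh by (simp add: mg_def mh_def mult_mono)
    have "P x / (g x * h x) \<le> P t / (g x * h x)"
      using Pm[OF x] gx by (simp add: divide_right_mono)
    also have "\<dots> \<le> P t / (mg * mh)"
      using Pt gh mg mh gx by (intro divide_left_mono) auto
    finally have "1 + P x / (g x * h x) \<le> K0" by (simp add: K0_def)
    then have "c x \<le> K0 / (s * x)" unfolding c_def using s x x0
      by (intro divide_right_mono) auto
    also have "\<dots> \<le> K" unfolding K_def using s x x0 K0
      by (intro divide_left_mono) auto
    finally show ?thesis .
  qed
  define w where "w x = (h x - g x)\<^sup>2 * exp (- (2 * K) * x)" for x
  define w' where "w' x = 2 * (h x - g x) * ((h x + (h x)\<^sup>2 - P x) / (s * x * h x)
        - (g x + (g x)\<^sup>2 - P x) / (s * x * g x)) * exp (- (2 * K) * x)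
        + (h x - g x)\<^sup>2 * (exp (- (2 * K) * x) * (- (2 * K)))" for x
  have dw: "(w has_real_derivative w' x) (at x within ?S)" if x: "x \<in> ?S" for x
    unfolding w_def w'_def
    by (rule derivative_eq_intros dh[OF x] dg[OF x] refl | simp)+
  have w'le: "w' x \<le> 0" if x: "x \<in> ?S" for x
  proof -
    have "w' x = 2 * (h x - g x) * ((h x - g x) * c x) * exp (- (2 * K) * x)
        + (h x - g x)\<^sup>2 * (exp (- (2 * K) * x) * (- (2 * K)))"
      unfolding w'_def c_def using gpos[OF x] hpos[OF x] s x x0
      by (subst ode_diff_alg) auto
    also have "\<dots> = 2 * (h x - g x)\<^sup>2 * exp (- (2 * K) * x) * (c x - K)"
      by (simp add: power2_eq_square algebra_simps)
    also have "\<dots> \<le> 0" using cK[OF x]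
      by (intro mult_nonneg_nonpos) auto
    finally show ?thesis .
  qed
  have "w t \<le> w x0"
  proof (cases "x0 = t")
    case True then show ?thesis by simp
  next
    case False
    show ?thesis
    proof (rule DERIV_nonpos_imp_decreasing_open[OF t])
      fix x assume x: "x0 < x" "x < t"
      have "(w has_real_derivative w' x) (at x)"
        using dw[of x] x at_within_Icc_at[of x0 x t] by auto
      then show "\<exists>y. DERIV w x :> y \<and> y \<le> 0" using w'le[of x] x by auto
    next
      show "continuous_on ?S w" by (rule DERIV_continuous_on[OF dw])
    qed
  qed
  also have "w x0 = 0" by (simp add: w_def init)
  finally have "(h t - g t)\<^sup>2 * exp (- (2 * K) * t) \<le> 0" by (simp add: w_def)
  then have "(h t - g t)\<^sup>2 \<le> 0" by (simp add: mult_le_0_iff)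
  then show ?thesis by simp
qed


lemma lip_mvt1:
  fixes F F' :: "real \<Rightarrow> real"
  assumes d: "\<And>z. z \<in> {c..d} \<Longrightarrow> DERIV F z :> F' z"
    and b: "\<And>z. z \<in> {c..d} \<Longrightarrow> \<bar>F' z\<bar> \<le> K"
    and u: "u \<in> {c..d}" and v: "v \<in> {c..d}" and uv: "u < v"
  shows "\<bar>F u - F v\<bar> \<le> K * \<bar>u - v\<bar>"
proof -
  obtain z where z: "u < z" "z < v" "F v - F u = (v - u) * F' z"
    using MVT2[OF uv, of F F'] d u v by auto
  have zz: "z \<in> {c..d}" using z u v by auto
  have "\<bar>F u - F v\<bar> = \<bar>(v - u) * F' z\<bar>" using z(3) by (metis abs_minus_commute)
  also have "\<dots> = \<bar>v - u\<bar> * \<bar>F' z\<bar>" by (rule abs_mult)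
  also have "\<dots> \<le> \<bar>v - u\<bar> * K" by (intro mult_left_mono b zz) auto
  finally show ?thesis by (simp add: abs_minus_commute mult.commute)
qed

lemma lip_mvt:
  fixes F F' :: "real \<Rightarrow> real"
  assumes d: "\<And>z. z \<in> {c..d} \<Longrightarrow> DERIV F z :> F' z"
    and b: "\<And>z. z \<in> {c..d} \<Longrightarrow> \<bar>F' z\<bar> \<le> K"
    and u: "u \<in> {c..d}" and v: "v \<in> {c..d}"
  shows "\<bar>F u - F v\<bar> \<le> K * \<bar>u - v\<bar>"
proof -
  consider "u < v" | "u = v" | "v < u" by linarith
  then show ?thesis
  proof cases
    case 1 then show ?thesis using lip_mvt1[OF d b u v] by auto
  next
    case 2 then show ?thesis by simp
  next
    case 3 then show ?thesis using lip_mvt1[OF d b v u]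
      by (simp add: abs_minus_commute)
  qed
qed

theorem lemma1:
  fixes s x0 gamma0 :: real and P :: "real \<Rightarrow> real"
  assumes "s > 0" and "x0 > 0"
    and "C2_on_nonneg P"
    and "strict_mono_on {0..} P"
    and "P 0 = 0"
    and "\<And>x. x > 0 \<Longrightarrow> P x > 0"
    and "(\<lambda>z. P z * z powr (-1 - 2 / s)) integrable_on {x0..}"
    and "0 < gamma0" and "gamma0 < gamma_c P x0"
  shows "\<exists>x1 g. x1 > x0 \<and> pos_solution s P x0 gamma0 g x1 \<and>
           (g \<longlongrightarrow> 0) (at_left x1) \<and>
           (\<forall>h b. pos_solution s P x0 gamma0 h b \<longrightarrow>
                  b \<le> x1 \<and> (\<forall>x\<in>{x0..<b}. h x = g x))"
proof -
  note s = assms(1) and x0 = assms(2) and g0 = assms(8)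
  obtain P' P'' where dP: "\<forall>x\<in>{0..}. (P has_real_derivative P' x) (at x within {0..})"
    and dP': "\<forall>x\<in>{0..}. (P' has_real_derivative P'' x) (at x within {0..})"
    using assms(3) unfolding C2_on_nonneg_def by blast
  have contP: "continuous_on {0..} P" by (rule DERIV_continuous_on) (use dP in auto)
  have contP': "continuous_on {0..} P'" by (rule DERIV_continuous_on) (use dP' in auto)
  have dPat: "DERIV P x :> P' x" if "x > 0" for x
  proof -
    have "(P has_real_derivative P' x) (at x within {0..})" using dP that by auto
    moreover have "at x within {0..} = at x" using that by (intro at_within_interior) auto
    ultimately show ?thesis by simp
  qed
  have Pmono: "P x \<le> P y" if "0 \<le> x" "x \<le> y" for x y
  proof (cases "x = y")
    case False
    then show ?thesis using assms(4) that unfolding strict_mono_on_def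
      by (metis atLeast_iff le_less order_trans)
  qed simp
  have del0: "gamma0 + gamma0\<^sup>2 < P x0"
  proof -
    have Px0: "P x0 > 0" using assms(6) x0 by auto
    have "2 * gamma0 + 1 < sqrt (1 + 4 * P x0)" using assms(9) unfolding gamma_c_def by simp
    then have "(2 * gamma0 + 1)\<^sup>2 < (sqrt (1 + 4 * P x0))\<^sup>2"
      using g0 by (intro power_strict_mono) auto
    then have "(2 * gamma0 + 1)\<^sup>2 < 1 + 4 * P x0" using Px0 by simp
    then show ?thesis by (simp add: power2_eq_square algebra_simps)
  qed
  define \<delta> where "\<delta> = P x0 - gamma0 - gamma0\<^sup>2"
  have del: "\<delta> > 0" using del0 by (simp add: \<delta>_def)
  define y0 where "y0 = ln x0"
  define B where "B = s * gamma0 / \<delta>"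
  have B: "B \<ge> 0" using s g0 del by (simp add: B_def)
  define M where "M = y0 + B * gamma0"
  have y0M: "y0 \<le> M" using B g0 by (simp add: M_def)
  define cl where "cl y = max y0 (min y M)" for y
  have clr: "cl y \<in> {y0..M}" for y using y0M by (auto simp: cl_def)
  have ecl: "exp (cl y) \<ge> x0" for y
  proof -
    have "exp y0 \<le> exp (cl y)" using clr[of y] by simp
    then show ?thesis using x0 by (simp add: y0_def)
  qed
  have clL: "\<bar>cl a - cl b\<bar> \<le> \<bar>a - b\<bar>" for a b
    by (simp add: cl_def max_def min_def abs_if)
  have clid: "cl y = y" if "y \<in> {y0..M}" for y using that by (auto simp: cl_def)
  define Q where "Q z = P (exp z)" for z
  define Q' where "Q' z = P' (exp z) * exp z" for z
  have dQ: "DERIV Q z :> Q' z" for z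
    unfolding Q_def Q'_def
    by (rule DERIV_chain2[OF dPat DERIV_exp]) simp
  have cQ': "continuous_on {y0..M} Q'"
    unfolding Q'_def
    by (intro continuous_intros continuous_on_compose2[OF contP']) auto
  obtain zK where zK: "\<And>z. z \<in> {y0..M} \<Longrightarrow> \<bar>Q' z\<bar> \<le> \<bar>Q' zK\<bar>"
    using continuous_attains_sup[OF compact_Icc _ continuous_on_rabs[OF cQ']] y0M by fastforce
  define K where "K = \<bar>Q' zK\<bar>"
  have K: "K \<ge> 0" by (simp add: K_def)
  have QL: "\<bar>Q a - Q b\<bar> \<le> K * \<bar>a - b\<bar>" if "a \<in> {y0..M}" "b \<in> {y0..M}" for a b
    using lip_mvt[of y0 M Q Q' K a b] dQ zK that by (auto simp: K_def)
  define Den where "Den \<tau> y = P (exp (cl y)) - (gamma0 - \<tau>) - (gamma0 - \<tau>)\<^sup>2" for \<tau> y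
  have Dge: "\<delta> \<le> Den \<tau> y" if t: "\<tau> \<in> {0..gamma0}" for \<tau> y
  proof -
    have 1: "P x0 \<le> P (exp (cl y))" using ecl[of y] x0 by (intro Pmono) auto
    have 2: "(gamma0 - \<tau>)\<^sup>2 \<le> gamma0\<^sup>2" using t by (intro power_mono) auto
    have 3: "0 \<le> \<tau>" using t by auto
    show ?thesis using 1 2 3 unfolding Den_def \<delta>_def by linarith
  qed
  define H where "H \<tau> y = s * (gamma0 - \<tau>) / Den \<tau> y" for \<tau> y
  have Hnn: "0 \<le> H \<tau> y" if t: "\<tau> \<in> {0..gamma0}" for \<tau> y
    using Dge[OF t, of y] del s t by (simp add: H_def)
  have Hpos: "0 < H \<tau> y" if t: "\<tau> \<in> {0..gamma0}" "\<tau> < gamma0" for \<tau> y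
    using Dge[OF t(1), of y] del s t by (simp add: H_def)
  have Hle: "H \<tau> y \<le> B" if t: "\<tau> \<in> {0..gamma0}" for \<tau> y
    unfolding H_def B_def
    using Dge[OF t, of y] del s t by (intro frac_le) auto
  define Lc where "Lc = s * gamma0 * K / \<delta>\<^sup>2"
  have Lc: "Lc \<ge> 0" using s g0 K by (simp add: Lc_def)
  have Hlip: "\<bar>H \<tau> a - H \<tau> b\<bar> \<le> Lc * \<bar>a - b\<bar>" if t: "\<tau> \<in> {0..gamma0}" for \<tau> a b
  proof -
    have Da: "Den \<tau> a \<ge> \<delta>" and Db: "Den \<tau> b \<ge> \<delta>" using Dge[OF t] by auto
    have eq: "H \<tau> a - H \<tau> b = s * (gamma0 - \<tau>) * (Q (cl b) - Q (cl a)) / (Den \<tau> a * Den \<tau> b)"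
      using Da Db del by (simp add: H_def Q_def field_simps) (simp add: Den_def algebra_simps)
    have "\<bar>H \<tau> a - H \<tau> b\<bar> = s * (gamma0 - \<tau>) * \<bar>Q (cl b) - Q (cl a)\<bar> / (Den \<tau> a * Den \<tau> b)"
      unfolding eq using Da Db del s t by (simp add: abs_mult abs_divide)
    also have "\<dots> \<le> s * gamma0 * (K * \<bar>a - b\<bar>) / (\<delta> * \<delta>)"
    proof (rule frac_le)
      have "\<bar>Q (cl b) - Q (cl a)\<bar> \<le> K * \<bar>cl b - cl a\<bar>" by (rule QL[OF clr clr])
      also have "\<dots> \<le> K * \<bar>a - b\<bar>" using clL[of b a] K by (intro mult_left_mono) (auto simp: abs_minus_commute)
      finally have q: "\<bar>Q (cl b) - Q (cl a)\<bar> \<le> K * \<bar>a - b\<bar>" .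
      show "s * (gamma0 - \<tau>) * \<bar>Q (cl b) - Q (cl a)\<bar> \<le> s * gamma0 * (K * \<bar>a - b\<bar>)"
        using s t g0 q by (intro mult_mono) auto
      show "0 \<le> s * gamma0 * (K * \<bar>a - b\<bar>)" using s g0 K by simp
      show "0 < \<delta> * \<delta>" using del by simp
      show "\<delta> * \<delta> \<le> Den \<tau> a * Den \<tau> b" using Da Db del by (intro mult_mono) auto
    qed
    also have "\<dots> = Lc * \<bar>a - b\<bar>" by (simp add: Lc_def power2_eq_square)
    finally show ?thesis .
  qed
  have Hcont: "continuous_on {0..gamma0} (\<lambda>t. H t (u t))" if cu: "continuous_on {0..gamma0} u" for u
  proof -
    have c1: "continuous_on {0..gamma0} (\<lambda>t. P (exp (cl (u t))))"
      unfolding cl_def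
      by (rule continuous_on_compose2[OF contP]) (auto intro!: continuous_intros cu)
    show ?thesis unfolding H_def Den_def
      apply (intro continuous_intros c1 ballI)
      subgoal premises prems for t
        using Dge[OF prems, of "u t"] del unfolding Den_def by linarith
      done
  qed
  obtain Y where Y0: "Y 0 = y0" and cY: "continuous_on {0..gamma0} Y"
    and dY: "\<And>t. t \<in> {0..gamma0} \<Longrightarrow> (Y has_real_derivative H t (Y t)) (at t within {0..gamma0})"
  proof -
    have Habs: "\<bar>H \<tau> y\<bar> \<le> B" if "\<tau> \<in> {0..gamma0}" for \<tau> y
      using Hnn[OF that, of y] Hle[OF that, of y] by simp
    have "\<exists>u. u 0 = y0 \<and> continuous_on {0..gamma0} u \<and>
     (\<forall>t\<in>{0..gamma0}. (u has_real_derivative H t (u t)) (at t within {0..gamma0}))"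
      by (rule picard[of gamma0 Lc H B y0]) (use g0 Lc Hcont Hlip Habs in auto)
    then show ?thesis using that by blast
  qed
  let ?S = "{0..gamma0}"
  have dYat: "DERIV Y t :> H t (Y t)" if "0 < t" "t < gamma0" for t
    using dY[of t] that at_within_Icc_at[of 0 t gamma0] by auto
  have Ylo: "y0 \<le> Y t" if t: "t \<in> ?S" for t
  proof (cases "t = 0")
    case True then show ?thesis by (simp add: Y0)
  next
    case False
    have "Y 0 \<le> Y t"
    proof (rule DERIV_nonneg_imp_increasing_open[of 0 t Y])
      show "0 \<le> t" using t by auto
      fix x assume "0 < x" "x < t"
      then show "\<exists>y. DERIV Y x :> y \<and> y \<ge> 0" using dYat[of x] Hnn[of x] t by auto
    next
      show "continuous_on {0..t} Y" by (rule continuous_on_subset[OF cY]) (use t in auto)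
    qed
    then show ?thesis by (simp add: Y0)
  qed
  have Yhi: "Y t \<le> y0 + B * t" if t: "t \<in> ?S" for t
  proof (cases "t = 0")
    case True then show ?thesis by (simp add: Y0)
  next
    case False
    have "(\<lambda>x. B * x - Y x) 0 \<le> (\<lambda>x. B * x - Y x) t"
    proof (rule DERIV_nonneg_imp_increasing_open[of 0 t "\<lambda>x. B * x - Y x"])
      show "0 \<le> t" using t by auto
      fix x assume x: "0 < x" "x < t"
      have "DERIV (\<lambda>x. B * x - Y x) x :> B * 1 - H x (Y x)"
        using x t by (intro derivative_intros dYat) auto
      then show "\<exists>y. DERIV (\<lambda>x. B * x - Y x) x :> y \<and> y \<ge> 0" using Hle[of x] x t by auto
    next
      show "continuous_on {0..t} (\<lambda>x. B * x - Y x)"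
        using continuous_on_subset[OF cY, of "{0..t}"] t by (intro continuous_intros) auto
    qed
    then show ?thesis by (simp add: Y0)
  qed
  have YM: "Y t \<in> {y0..M}" if t: "t \<in> ?S" for t
  proof -
    have "B * t \<le> B * gamma0" using t B by (intro mult_left_mono) auto
    then show ?thesis using Ylo[OF t] Yhi[OF t] by (auto simp: M_def)
  qed
  have Ystr: "Y t1 < Y t2" if t: "t1 \<in> ?S" "t2 \<in> ?S" "t1 < t2" for t1 t2
  proof (rule DERIV_pos_imp_increasing_open[of t1 t2 Y, OF t(3)])
    fix x assume x: "t1 < x" "x < t2"
    then show "\<exists>y. DERIV Y x :> y \<and> y > 0" using dYat[of x] Hpos[of x] t by auto
  next
    show "continuous_on {t1..t2} Y" by (rule continuous_on_subset[OF cY]) (use t in auto)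
  qed
  define X where "X t = exp (Y t)" for t
  define x1 where "x1 = X gamma0"
  have X0: "X 0 = x0" using x0 by (simp add: X_def Y0 y0_def)
  have Xstr: "X t1 < X t2" if "t1 \<in> ?S" "t2 \<in> ?S" "t1 < t2" for t1 t2
    using Ystr[OF that] by (simp add: X_def)
  have Xmono: "X t1 \<le> X t2" if "t1 \<in> ?S" "t2 \<in> ?S" "t1 \<le> t2" for t1 t2
    using Xstr[OF that(1,2)] that(3) by (cases "t1 = t2") auto
  have inj: "inj_on X ?S"
    by (rule inj_onI) (metis Xstr less_irrefl linorder_neqE_linordered_idom)
  have x01: "x0 < x1" using Xstr[of 0 gamma0] g0 by (simp add: X0 x1_def)
  have cX: "continuous_on ?S X" unfolding X_def by (intro continuous_intros cY)
  have XS: "X ` ?S = {x0..x1}"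
  proof
    show "X ` ?S \<subseteq> {x0..x1}"
      using Xmono[of 0] Xmono[of _ gamma0] g0 by (auto simp: X0 x1_def)
    show "{x0..x1} \<subseteq> X ` ?S"
    proof
      fix x assume x: "x \<in> {x0..x1}"
      obtain t where "0 \<le> t" "t \<le> gamma0" "X t = x"
        using IVT'[of X 0 x gamma0] x g0 cX by (auto simp: X0 x1_def)
      then show "x \<in> X ` ?S" by force
    qed
  qed
  define Ti where "Ti = inv_into ?S X"
  define gs where "gs x = gamma0 - Ti x" for x
  have TiX: "Ti (X t) = t" if "t \<in> ?S" for t
    using inv_into_f_f[OF inj that] by (simp add: Ti_def)
  have XTi: "X (Ti x) = x" "Ti x \<in> ?S" if "x \<in> {x0..x1}" for x
    using that XS f_inv_into_f[of x X ?S] inv_into_into[of x X ?S] by (auto simp: Ti_def)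
  have cTi: "continuous_on {x0..x1} Ti"
    using continuous_on_inv[OF cX compact_Icc, of Ti] TiX XS by auto
  have cgs: "continuous_on {x0..x1} gs" unfolding gs_def by (intro continuous_intros cTi)
  have dX: "(X has_real_derivative X t * H t (Y t)) (at t within ?S)" if "t \<in> ?S" for t
    unfolding X_def by (rule derivative_eq_intros dY[OF that] refl)+
  have gs0: "gs x0 = gamma0" using TiX[of 0] g0 by (simp add: gs_def X0)
  have gs1: "gs x1 = 0" using TiX[of gamma0] g0 by (simp add: gs_def x1_def)
  have gspos: "gs x > 0" and dgs: "(gs has_real_derivative (gs x + (gs x)\<^sup>2 - P x) / (s * x * gs x))
      (at x within {x0..x1})" if x: "x \<in> {x0..<x1}" for x
  proof -
    define \<tau> where "\<tau> = Ti x"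
    have x': "x \<in> {x0..x1}" using x by auto
    have t: "\<tau> \<in> ?S" and Xt: "X \<tau> = x" using XTi[OF x'] by (auto simp: \<tau>_def)
    have tl: "\<tau> < gamma0"
    proof (rule ccontr)
      assume "\<not> \<tau> < gamma0"
      then have "\<tau> = gamma0" using t by auto
      then show False using Xt x by (auto simp: x1_def)
    qed
    show gp: "gs x > 0" using tl by (simp add: gs_def \<tau>_def)
    have xpos: "x > 0" using x x0 by auto
    have Yt: "exp (Y \<tau>) = x" using Xt by (simp add: X_def)
    have clt: "cl (Y \<tau>) = Y \<tau>" by (rule clid[OF YM[OF t]])
    define D where "D = X \<tau> * H \<tau> (Y \<tau>)"
    have Hp: "H \<tau> (Y \<tau>) > 0" using Hpos[OF t tl] .
    have D: "D \<noteq> 0" using Hp by (simp add: D_def X_def)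
    have cont: "continuous (at (X \<tau>) within X ` ?S) Ti"
      using cTi Xt x' XS by (simp add: continuous_on_eq_continuous_within)
    have "(Ti has_real_derivative inverse D) (at (X \<tau>) within X ` ?S)"
      unfolding D_def by (rule inv_deriv_within[OF dX[OF t] _ t TiX cont]) (use D in \<open>auto simp: D_def\<close>)
    then have dTi: "(Ti has_real_derivative inverse D) (at x within {x0..x1})" using Xt XS by simp
    have "(gs has_real_derivative - inverse D) (at x within {x0..x1})"
      unfolding gs_def by (rule derivative_eq_intros dTi refl)+ simp
    moreover have "- inverse D = (gs x + (gs x)\<^sup>2 - P x) / (s * x * gs x)"
    proof -
      have gx: "gs x = gamma0 - \<tau>" by (simp add: gs_def \<tau>_def)
      have Dn: "Den \<tau> (Y \<tau>) = P x - gs x - (gs x)\<^sup>2" by (simp add: Den_def clt Yt gx)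
      have Dp: "Den \<tau> (Y \<tau>) \<ge> \<delta>" using Dge[OF t] .
      define E where "E = Den \<tau> (Y \<tau>)"
      have E: "E \<noteq> 0" using Dp del by (simp add: E_def)
      have "D = x * (s * gs x / E)" by (simp add: D_def Xt H_def gx E_def)
      then have "- inverse D = - (E / (x * (s * gs x)))"
        using E gp xpos s by (simp add: inverse_eq_divide)
      also have "\<dots> = (gs x + (gs x)\<^sup>2 - P x) / (s * x * gs x)"
        unfolding E_def Dn by (simp add: minus_divide_left mult_ac)
      finally show ?thesis .
    qed
    ultimately show "(gs has_real_derivative (gs x + (gs x)\<^sup>2 - P x) / (s * x * gs x))
      (at x within {x0..x1})" by simp
  qed
  have lim: "(gs \<longlongrightarrow> 0) (at_left x1)"
    using continuous_on_Icc_at_leftD[OF cgs x01] gs1 by simp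
  have possol: "pos_solution s P x0 gamma0 gs x1"
    unfolding pos_solution_def
  proof (intro conjI ballI x01 gs0)
    fix x assume x: "x \<in> {x0..<x1}"
    show "gs x > 0" by (rule gspos[OF x])
    show "(gs has_real_derivative (gs x + (gs x)\<^sup>2 - P x) / (s * x * gs x)) (at x within {x0..<x1})"
      by (rule DERIV_subset[OF dgs[OF x]]) auto
  qed
  show ?thesis
  proof (intro exI conjI allI impI)
    fix h b assume hb: "pos_solution s P x0 gamma0 h b"
    then have hb0: "x0 < b" "h x0 = gamma0" and
      hb1: "\<And>x. x \<in> {x0..<b} \<Longrightarrow> h x > 0 \<and>
        (h has_real_derivative (h x + (h x)\<^sup>2 - P x) / (s * x * h x)) (at x within {x0..<b})"
      unfolding pos_solution_def by auto
    have eqs: "h t = gs t" if t: "x0 \<le> t" "t < b" "t < x1" for t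
    proof (rule uniq[of s x0 t P gs h])
      show "s > 0" "x0 > 0" "x0 \<le> t" using s x0 t by auto
      show "P x \<le> P t" if "x \<in> {x0..t}" for x using that x0 by (intro Pmono) auto
      show "P t \<ge> 0" using assms(6)[of t] x0 t by auto
      show "gs x > 0" if "x \<in> {x0..t}" for x using gspos[of x] that t by auto
      show "h x > 0" if "x \<in> {x0..t}" for x using hb1[of x] that t by auto
      show "(gs has_real_derivative (gs x + (gs x)\<^sup>2 - P x) / (s * x * gs x)) (at x within {x0..t})"
        if "x \<in> {x0..t}" for x
        by (rule DERIV_subset[OF dgs]) (use that t in auto)
      show "(h has_real_derivative (h x + (h x)\<^sup>2 - P x) / (s * x * h x)) (at x within {x0..t})"
        if "x \<in> {x0..t}" for x
        by (rule DERIV_subset[OF hb1[THEN conjunct2]]) (use that t in auto)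
      show "gs x0 = h x0" using gs0 hb0 by simp
    qed
    show bx: "b \<le> x1"
    proof (rule ccontr)
      assume "\<not> b \<le> x1"
      then have bx1: "x1 < b" by simp
      have x1i: "x1 \<in> {x0..<b}" using bx1 x01 by auto
      have hp: "h x1 > 0" using hb1[OF x1i] by auto
      have "continuous (at x1 within {x0..<b}) h"
        using hb1[OF x1i] by (auto intro: DERIV_continuous)
      then have "continuous (at x1 within {x0..x1}) h"
        by (rule continuous_within_subset) (use bx1 in auto)
      then have hl: "(h \<longlongrightarrow> h x1) (at_left x1)"
        using at_within_Icc_at_left[OF x01] by (simp add: continuous_within)
      have "\<forall>\<^sub>F x in at_left x1. gs x = h x"
        using eventually_at_left_real[OF x01]
        by eventually_elim (use eqs bx1 in auto)
      then have "(h \<longlongrightarrow> 0) (at_left x1)" using lim by (rule Lim_transform_eventually[rotated])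
      then have "h x1 = 0" using hl tendsto_unique trivial_limit_at_left_real by blast
      then show False using hp by simp
    qed
    show "\<forall>x\<in>{x0..<b}. h x = gs x" using eqs bx by auto
  qed (use x01 possol lim in auto)
qed

end
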